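(* Let $m,n\in\mathbb{N}$, $\varepsilon\in\mathbb{R}$, $\bar g=-4\,du\,dv+\bar\rho^2\mathring\gamma_{\mathbb{S}^{n-1}}-\tau^2\mathring\gamma_{\mathbb{S}^{m-1}}$ with $\bar\rho=r+2\varepsilon f$. Define on $\mathfrak{D}=\{f>0\}$ \[ \bar h:=\frac12+\frac{\varepsilon f}{2\bar\rho},\qquad \bar\pi:=\bar\nabla^2f-\bar h\,\bar g,\qquad \bar w:=\frac12\bar\square f-\bar h=\frac{n+m-2}{4}+\frac{(n-2)\varepsilon f}{2\bar\rho}, \] and $T:=\tfrac12 f^{-1/2}(-u\partial_u+v\partial_v)$, $N:=\tfrac12 f^{-1/2}(u\partial_u+v\partial_v)$. Then, with respect to the frame consisting of $T$, $N$, the spatial angular coordinate directions (indices $a,b$) and the temporal angular coordinate directions (indices $C,D$), the nonzero components of $\bar\pi$ are \[ \bar\pi_{TT}=\frac{\varepsilon f}{2\bar\rho},\qquad \bar\pi_{ab}=\frac{\varepsilon f}{2\bar\rho}\bar g_{ab},\qquad \bar\pi_{CD}=-\frac{\varepsilon f}{2\bar\rho}\bar g_{CD},\qquad \bar\pi_{NN}=-\frac{\varepsilon f}{2\bar\rho}. \] Moreover \[ \bar\square\bar w=-\frac{(n-2)\varepsilon}{2\bar\rho}\left[\frac{(n-3)f}{\bar\rho^2}-\frac{(n+m-2)r}{2\bar\rho}\right]. \]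
   Context: On $\mathbb{R}^{m+n}$ with Cartesian coordinates $t\in\mathbb{R}^m$, $x\in\mathbb{R}^n$: $r=|x|$, $\tau=|t|$, $u=\frac12(\tau-r)$, $v=\frac12(\tau+r)$, $f=-uv=\frac14(|x|^2-|t|^2)$. On $\{\tau\ne0,r\ne0\}$ one uses coordinates $(u,v,\omega_x,\omega_t)$ with $\omega_x\in\mathbb{S}^{n-1}$, $\omega_t\in\mathbb{S}^{m-1}$; $\partial_u,\partial_v$ are the coordinate vector fields; $a,b$ index local coordinates on $\mathbb{S}^{n-1}$ and $C,D$ local coordinates on $\mathbb{S}^{m-1}$; $\mathring\gamma$ denotes unit round metrics. $\bar\nabla$ is the Levi-Civita connection of $\bar g$, $\bar\nabla^2f$ the Hessian, $\bar\square=\bar g^{\alpha\beta}\bar\nabla_{\alpha\beta}$. *)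

theory Defs
  imports "HOL-Analysis.Analysis"
begin

(* Coordinates on an open piece of R^(m+n): a point is p :: nat => real, only indices
   < n+m matter.  Index 0 = u, index 1 = v, indices 2 .. n = local coordinates
   (theta_1..theta_{n-1}) on S^(n-1) (indices a,b), indices n+1 .. n+m-1 = local
   coordinates on S^(m-1) (indices C,D). *)

definition pdiff :: "nat \<Rightarrow> ((nat \<Rightarrow> real) \<Rightarrow> real) \<Rightarrow> (nat \<Rightarrow> real) \<Rightarrow> real" where
  "pdiff i F p = deriv (\<lambda>s. F (p(i := s))) (p i)"

definition mat_inv :: "nat \<Rightarrow> (nat \<Rightarrow> nat \<Rightarrow> real) \<Rightarrow> nat \<Rightarrow> nat \<Rightarrow> real" where
  "mat_inv d G = (SOME H. \<forall>i<d. \<forall>j<d. (\<Sum>k<d. G i k * H k j) = (if i = j then 1 else 0))"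

definition christoffel ::
  "nat \<Rightarrow> ((nat \<Rightarrow> real) \<Rightarrow> nat \<Rightarrow> nat \<Rightarrow> real) \<Rightarrow> (nat \<Rightarrow> real) \<Rightarrow> nat \<Rightarrow> nat \<Rightarrow> nat \<Rightarrow> real" where
  "christoffel d g p k i j =
     (\<Sum>l<d. mat_inv d (g p) k l *
        (pdiff i (\<lambda>q. g q j l) p + pdiff j (\<lambda>q. g q i l) p - pdiff l (\<lambda>q. g q i j) p)) / 2"

definition hessian ::
  "nat \<Rightarrow> ((nat \<Rightarrow> real) \<Rightarrow> nat \<Rightarrow> nat \<Rightarrow> real) \<Rightarrow> ((nat \<Rightarrow> real) \<Rightarrow> real) \<Rightarrow> (nat \<Rightarrow> real) \<Rightarrow> nat \<Rightarrow> nat \<Rightarrow> real" where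
  "hessian d g F p i j = pdiff i (\<lambda>q. pdiff j F q) p - (\<Sum>k<d. christoffel d g p k i j * pdiff k F p)"

definition dalembert ::
  "nat \<Rightarrow> ((nat \<Rightarrow> real) \<Rightarrow> nat \<Rightarrow> nat \<Rightarrow> real) \<Rightarrow> ((nat \<Rightarrow> real) \<Rightarrow> real) \<Rightarrow> (nat \<Rightarrow> real) \<Rightarrow> real" where
  "dalembert d g F p = (\<Sum>i<d. \<Sum>j<d. mat_inv d (g p) i j * hessian d g F p i j)"

definition bilin :: "nat \<Rightarrow> (nat \<Rightarrow> nat \<Rightarrow> real) \<Rightarrow> (nat \<Rightarrow> real) \<Rightarrow> (nat \<Rightarrow> real) \<Rightarrow> real" where
  "bilin d B X Y = (\<Sum>i<d. \<Sum>j<d. X i * Y j * B i j)"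

definition u_of :: "(nat \<Rightarrow> real) \<Rightarrow> real" where "u_of p = p 0"
definition v_of :: "(nat \<Rightarrow> real) \<Rightarrow> real" where "v_of p = p 1"
definition tau_of :: "(nat \<Rightarrow> real) \<Rightarrow> real" where "tau_of p = u_of p + v_of p"
definition r_of :: "(nat \<Rightarrow> real) \<Rightarrow> real" where "r_of p = v_of p - u_of p"
definition f_of :: "(nat \<Rightarrow> real) \<Rightarrow> real" where "f_of p = - u_of p * v_of p"
definition rho_of :: "real \<Rightarrow> (nat \<Rightarrow> real) \<Rightarrow> real" where
  "rho_of \<epsilon> p = r_of p + 2 * \<epsilon> * f_of p"

definition ang_x :: "nat \<Rightarrow> (nat \<Rightarrow> real) \<Rightarrow> nat \<Rightarrow> real" where
  "ang_x n p = (\<lambda>a. if a < n - 1 then p (Suc (Suc a)) else 0)"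
definition ang_t :: "nat \<Rightarrow> nat \<Rightarrow> (nat \<Rightarrow> real) \<Rightarrow> nat \<Rightarrow> real" where
  "ang_t n m p = (\<lambda>c. if c < m - 1 then p (n + 1 + c) else 0)"

definition is_x :: "nat \<Rightarrow> nat \<Rightarrow> bool" where "is_x n i \<longleftrightarrow> 2 \<le> i \<and> i < n + 1"
definition is_t :: "nat \<Rightarrow> nat \<Rightarrow> nat \<Rightarrow> bool" where "is_t n m i \<longleftrightarrow> n + 1 \<le> i \<and> i < n + m"

(* unit round metric of S^k in the local coordinates given by a parametrisation
   phi : R^k -> S^k \<subseteq> R^(k+1):  pull-back of the Euclidean metric *)
definition sphere_metric :: "nat \<Rightarrow> ((nat \<Rightarrow> real) \<Rightarrow> nat \<Rightarrow> real) \<Rightarrow> (nat \<Rightarrow> real) \<Rightarrow> nat \<Rightarrow> nat \<Rightarrow> real" where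
  "sphere_metric k \<phi> \<theta> a b =
     (\<Sum>j<Suc k. pdiff a (\<lambda>\<eta>. \<phi> \<eta> j) \<theta> * pdiff b (\<lambda>\<eta>. \<phi> \<eta> j) \<theta>)"

definition local_sphere_chart :: "nat \<Rightarrow> ((nat \<Rightarrow> real) \<Rightarrow> nat \<Rightarrow> real) \<Rightarrow> (nat \<Rightarrow> real) \<Rightarrow> bool" where
  "local_sphere_chart k \<phi> \<theta>0 \<longleftrightarrow>
     (\<exists>e>0. \<forall>\<theta>. (\<forall>a<k. \<bar>\<theta> a - \<theta>0 a\<bar> < e) \<and> (\<forall>a\<ge>k. \<theta> a = 0) \<longrightarrow>
        (\<Sum>j<Suc k. (\<phi> \<theta> j)\<^sup>2) = 1 \<and>
        (\<forall>a<k. \<forall>j<Suc k. (\<lambda>s. \<phi> (\<theta>(a := s)) j) differentiable (at (\<theta> a))) \<and>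
        (\<exists>H. \<forall>a<k. \<forall>b<k. (\<Sum>c<k. sphere_metric k \<phi> \<theta> a c * H c b) = (if a = b then 1 else 0)))"

definition gbar :: "nat \<Rightarrow> nat \<Rightarrow> real \<Rightarrow> ((nat \<Rightarrow> real) \<Rightarrow> nat \<Rightarrow> real) \<Rightarrow> ((nat \<Rightarrow> real) \<Rightarrow> nat \<Rightarrow> real)
     \<Rightarrow> (nat \<Rightarrow> real) \<Rightarrow> nat \<Rightarrow> nat \<Rightarrow> real" where
  "gbar n m \<epsilon> \<phi>x \<phi>t p i j =
     (if (i = 0 \<and> j = 1) \<or> (i = 1 \<and> j = 0) then -2
      else if is_x n i \<and> is_x n j then
        (rho_of \<epsilon> p)\<^sup>2 * sphere_metric (n - 1) \<phi>x (ang_x n p) (i - 2) (j - 2)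
      else if is_t n m i \<and> is_t n m j then
        - (tau_of p)\<^sup>2 * sphere_metric (m - 1) \<phi>t (ang_t n m p) (i - (n + 1)) (j - (n + 1))
      else 0)"

definition hbar :: "real \<Rightarrow> (nat \<Rightarrow> real) \<Rightarrow> real" where
  "hbar \<epsilon> p = 1/2 + \<epsilon> * f_of p / (2 * rho_of \<epsilon> p)"

definition pibar :: "nat \<Rightarrow> nat \<Rightarrow> real \<Rightarrow> ((nat \<Rightarrow> real) \<Rightarrow> nat \<Rightarrow> real) \<Rightarrow> ((nat \<Rightarrow> real) \<Rightarrow> nat \<Rightarrow> real)
     \<Rightarrow> (nat \<Rightarrow> real) \<Rightarrow> nat \<Rightarrow> nat \<Rightarrow> real" where
  "pibar n m \<epsilon> \<phi>x \<phi>t p i j =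
     hessian (n + m) (gbar n m \<epsilon> \<phi>x \<phi>t) f_of p i j - hbar \<epsilon> p * gbar n m \<epsilon> \<phi>x \<phi>t p i j"

definition wbar :: "nat \<Rightarrow> nat \<Rightarrow> real \<Rightarrow> ((nat \<Rightarrow> real) \<Rightarrow> nat \<Rightarrow> real) \<Rightarrow> ((nat \<Rightarrow> real) \<Rightarrow> nat \<Rightarrow> real)
     \<Rightarrow> (nat \<Rightarrow> real) \<Rightarrow> real" where
  "wbar n m \<epsilon> \<phi>x \<phi>t p = dalembert (n + m) (gbar n m \<epsilon> \<phi>x \<phi>t) f_of p / 2 - hbar \<epsilon> p"

(* frame: 0 = T, 1 = N, other indices = coordinate vector fields *)
definition frame :: "(nat \<Rightarrow> real) \<Rightarrow> nat \<Rightarrow> nat \<Rightarrow> real" where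
  "frame p \<alpha> =
     (if \<alpha> = 0 then (\<lambda>i. if i = 0 then - u_of p / (2 * sqrt (f_of p))
                        else if i = 1 then v_of p / (2 * sqrt (f_of p)) else 0)
      else if \<alpha> = 1 then (\<lambda>i. if i = 0 then u_of p / (2 * sqrt (f_of p))
                        else if i = 1 then v_of p / (2 * sqrt (f_of p)) else 0)
      else (\<lambda>i. if i = \<alpha> then 1 else 0))"

end

theory Submission
  imports Defs
begin

lemma pdiff_DERIV: "((\<lambda>s. F (q(k:=s))) has_real_derivative D) (at (q k)) \<Longrightarrow> pdiff k F q = D"
  by (simp add: pdiff_def DERIV_imp_deriv)

lemma pdiff_const: "(\<And>s. F (q(k:=s)) = c) \<Longrightarrow> pdiff k F q = 0"
  by (simp add: pdiff_def)

lemma pdiff_local: "eventually (\<lambda>s. F (q(k:=s)) = F' (q(k:=s))) (nhds (q k)) \<Longrightarrow> pdiff k F q = pdiff k F' q"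
  unfolding pdiff_def by (rule deriv_cong_ev) auto

lemma sum_two: assumes "2 \<le> d" "\<And>i. i < d \<Longrightarrow> 2 \<le> i \<Longrightarrow> F i = 0"
  shows "(\<Sum>i<d. F i) = F 0 + F (Suc 0)"
proof -
  have "(\<Sum>i<d. F i) = (\<Sum>i\<in>{0, Suc 0}. F i)"
    by (rule sum.mono_neutral_right) (use assms in auto)
  then show ?thesis by simp
qed

lemma sum_block: fixes d :: nat assumes "\<And>k. k < d \<Longrightarrow> \<not> (a \<le> k \<and> k < a + l) \<Longrightarrow> F k = 0" "a + l \<le> d"
  shows "(\<Sum>k<d. F k) = (\<Sum>c<l. F (a + c))"
proof -
  have "(\<Sum>k<d. F k) = (\<Sum>k\<in>{a..<a+l}. F k)"
    by (rule sum.mono_neutral_right) (use assms in auto)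
  also have "\<dots> = (\<Sum>c<l. F (a + c))"
    by (simp add: sum.atLeastLessThan_shift_0[of _ a] atLeast0LessThan)
  finally show ?thesis .
qed

lemma inv_sym:
  fixes G M :: "nat \<Rightarrow> nat \<Rightarrow> real"
  assumes S: "\<And>i j. i < d \<Longrightarrow> j < d \<Longrightarrow> G i j = G j i"
    and I: "\<And>i j. i < d \<Longrightarrow> j < d \<Longrightarrow> (\<Sum>k<d. G i k * M k j) = (if i = j then 1 else 0)"
    and ij: "i < d" "j < d"
  shows "M i j = M j i"
proof -
  have L: "(\<Sum>l<d. M l i * G l k) = (if i = k then 1 else 0)" if "k < d" for k
  proof -
    have "(\<Sum>l<d. M l i * G l k) = (\<Sum>l<d. G k l * M l i)"
      by (intro sum.cong refl) (use S that in auto)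
    also have "\<dots> = (if k = i then 1 else 0)" using I[OF that ij(1)] .
    finally show ?thesis by auto
  qed
  have "M i j = (\<Sum>k<d. (if i = k then 1 else 0) * M k j)"
  proof -
    have "(\<Sum>k<d. (if i = k then 1 else 0) * M k j) = (\<Sum>k<d. if i = k then M k j else 0)"
      by (intro sum.cong) auto
    then show ?thesis using ij by simp
  qed
  also have "\<dots> = (\<Sum>k<d. (\<Sum>l<d. M l i * G l k) * M k j)"
    by (intro sum.cong refl) (simp add: L)
  also have "\<dots> = (\<Sum>l<d. M l i * (\<Sum>k<d. G l k * M k j))"
    by (simp add: sum_distrib_left sum_distrib_right mult.assoc) (rule sum.swap)
  also have "\<dots> = (\<Sum>l<d. M l i * (if l = j then 1 else 0))"
    by (intro sum.cong refl) (simp add: I ij)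
  also have "\<dots> = (\<Sum>l<d. if l = j then M l i else 0)"
    by (intro sum.cong) auto
  also have "\<dots> = M j i" using ij by simp
  finally show ?thesis .
qed

locale S =
  fixes n m :: nat and \<epsilon> :: real and \<phi>x \<phi>t :: "(nat \<Rightarrow> real) \<Rightarrow> nat \<Rightarrow> real"
    and p :: "nat \<Rightarrow> real" and \<delta> :: real
  assumes n1: "1 \<le> n" and m1: "1 \<le> m" and dpos: "\<delta> > 0"
    and chx: "\<And>\<theta>. (\<forall>a<n-1. \<bar>\<theta> a - ang_x n p a\<bar> < \<delta>) \<Longrightarrow> (\<forall>a\<ge>n-1. \<theta> a = 0) \<Longrightarrow>
       (\<exists>H. \<forall>a<n-1. \<forall>b<n-1. (\<Sum>c<n-1. sphere_metric (n-1) \<phi>x \<theta> a c * H c b) = (if a = b then 1 else 0))"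
    and cht: "\<And>\<theta>. (\<forall>a<m-1. \<bar>\<theta> a - ang_t n m p a\<bar> < \<delta>) \<Longrightarrow> (\<forall>a\<ge>m-1. \<theta> a = 0) \<Longrightarrow>
       (\<exists>H. \<forall>a<m-1. \<forall>b<m-1. (\<Sum>c<m-1. sphere_metric (m-1) \<phi>t \<theta> a c * H c b) = (if a = b then 1 else 0))"
    and rho_p: "rho_of \<epsilon> p \<noteq> 0" and tau_p: "tau_of p \<noteq> 0"
begin

abbreviation "d \<equiv> n + m"
abbreviation "G \<equiv> gbar n m \<epsilon> \<phi>x \<phi>t"
abbreviation "M q \<equiv> mat_inv d (G q)"

definition good :: "(nat \<Rightarrow> real) \<Rightarrow> bool" where
  "good q \<longleftrightarrow> (\<forall>k<d. \<bar>q k - p k\<bar> < \<delta>) \<and> rho_of \<epsilon> q \<noteq> 0 \<and> tau_of q \<noteq> 0"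

lemma good_p: "good p" using dpos rho_p tau_p by (simp add: good_def)

lemma cont_upd: "continuous_on UNIV (\<lambda>s. (q(k:=s)) j)"
  by (cases "j = k") (auto intro: continuous_intros)

lemma good_ev: assumes "good q" shows "eventually (\<lambda>s. good (q(k:=s))) (nhds (q k))"
proof -
  have o1: "open {s. \<bar>(q(k:=s)) j - p j\<bar> < \<delta>}" for j
    by (rule open_Collect_less) (intro continuous_intros cont_upd)+
  have o2: "open {s. rho_of \<epsilon> (q(k:=s)) \<noteq> 0}"
    unfolding rho_of_def r_of_def f_of_def u_of_def v_of_def
    by (rule open_Collect_neq) (intro continuous_intros cont_upd)+
  have o3: "open {s. tau_of (q(k:=s)) \<noteq> 0}"
    unfolding tau_of_def u_of_def v_of_def
    by (rule open_Collect_neq) (intro continuous_intros cont_upd)+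
  have e1: "eventually (\<lambda>s. \<forall>j\<in>{..<d}. \<bar>(q(k:=s)) j - p j\<bar> < \<delta>) (nhds (q k))"
  proof (rule eventually_ball_finite, simp, intro ballI)
    fix j assume "j \<in> {..<d}"
    then have "q k \<in> {s. \<bar>(q(k:=s)) j - p j\<bar> < \<delta>}" using assms by (auto simp: good_def)
    from eventually_nhds_in_open[OF o1 this] show "eventually (\<lambda>s. \<bar>(q(k:=s)) j - p j\<bar> < \<delta>) (nhds (q k))"
      by simp
  qed
  have "q k \<in> {s. rho_of \<epsilon> (q(k:=s)) \<noteq> 0}" using assms by (simp add: good_def)
  from eventually_nhds_in_open[OF o2 this]
  have e2: "eventually (\<lambda>s. rho_of \<epsilon> (q(k:=s)) \<noteq> 0) (nhds (q k))" by simp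
  have "q k \<in> {s. tau_of (q(k:=s)) \<noteq> 0}" using assms by (simp add: good_def)
  from eventually_nhds_in_open[OF o3 this]
  have e3: "eventually (\<lambda>s. tau_of (q(k:=s)) \<noteq> 0) (nhds (q k))" by simp
  show ?thesis using e1 e2 e3 by eventually_elim (auto simp: good_def)
qed

lemma pdiff_good: assumes "good q" "\<And>q. good q \<Longrightarrow> F q = F' q"
  shows "pdiff k F q = pdiff k F' q"
  by (rule pdiff_local) (use good_ev[OF assms(1), of k] assms(2) in \<open>auto elim: eventually_mono\<close>)

lemma sm_sym: "sphere_metric k \<phi> \<theta> a b = sphere_metric k \<phi> \<theta> b a"
  by (simp add: sphere_metric_def mult.commute)

lemma G_sym: "G q i j = G q j i"
  unfolding gbar_def by (auto simp: sm_sym)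

lemma G_row0: "G q 0 j = (if j = 1 then -2 else 0)"
  unfolding gbar_def is_x_def is_t_def using n1 by auto
lemma G_row1: "G q 1 j = (if j = 0 then -2 else 0)"
  unfolding gbar_def is_x_def is_t_def using n1 by auto
lemma G_col0: "G q j 0 = (if j = 1 then -2 else 0)"
  using G_row0 G_sym by metis
lemma G_col1: "G q j 1 = (if j = 0 then -2 else 0)"
  using G_row1 G_sym by metis

end

context S begin

lemma G_x: "is_x n i \<Longrightarrow> G q i k = (if is_x n k then (rho_of \<epsilon> q)\<^sup>2 * sphere_metric (n - 1) \<phi>x (ang_x n q) (i - 2) (k - 2) else 0)"
  unfolding gbar_def is_x_def is_t_def by auto
lemma G_t: "is_t n m i \<Longrightarrow> G q i k = (if is_t n m k then - (tau_of q)\<^sup>2 * sphere_metric (m - 1) \<phi>t (ang_t n m q) (i - (n+1)) (k - (n+1)) else 0)"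
  unfolding gbar_def is_x_def is_t_def using n1 by auto

lemma G_row1s: "G q (Suc 0) j = (if j = 0 then -2 else 0)" using G_row1 by simp
lemma G_col1s: "G q j (Suc 0) = (if j = 0 then -2 else 0)" using G_col1 by simp

lemma idx_cases: "i < d \<Longrightarrow> i = 0 \<or> i = 1 \<or> is_x n i \<or> is_t n m i"
  unfolding is_x_def is_t_def by auto

lemma inv_exists: assumes "good q"
  shows "\<exists>K. \<forall>i<d. \<forall>j<d. (\<Sum>k<d. G q i k * K k j) = (if i = j then 1 else 0)"
proof -
  have gq: "\<forall>k<d. \<bar>q k - p k\<bar> < \<delta>" and rq: "rho_of \<epsilon> q \<noteq> 0" and tq: "tau_of q \<noteq> 0"
    using assms by (auto simp: good_def)
  have x1: "\<forall>a<n-1. \<bar>ang_x n q a - ang_x n p a\<bar> < \<delta>"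
  proof (intro allI impI)
    fix a assume "a < n-1" then have "Suc (Suc a) < d" using m1 by simp
    then show "\<bar>ang_x n q a - ang_x n p a\<bar> < \<delta>" using gq \<open>a < n-1\<close> by (simp add: ang_x_def)
  qed
  have x2: "\<forall>a\<ge>n-1. ang_x n q a = 0" by (simp add: ang_x_def)
  obtain Hx where Hx: "\<And>a b. a<n-1 \<Longrightarrow> b<n-1 \<Longrightarrow> (\<Sum>c<n-1. sphere_metric (n-1) \<phi>x (ang_x n q) a c * Hx c b) = (if a = b then 1 else 0)"
    using chx[OF x1 x2] by blast
  have t1: "\<forall>a<m-1. \<bar>ang_t n m q a - ang_t n m p a\<bar> < \<delta>"
  proof (intro allI impI)
    fix a assume "a < m-1" then have "n + 1 + a < d" by simp
    then show "\<bar>ang_t n m q a - ang_t n m p a\<bar> < \<delta>" using gq \<open>a < m-1\<close> by (simp add: ang_t_def)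
  qed
  have t2: "\<forall>a\<ge>m-1. ang_t n m q a = 0" by (simp add: ang_t_def)
  obtain Ht where Ht: "\<And>a b. a<m-1 \<Longrightarrow> b<m-1 \<Longrightarrow> (\<Sum>c<m-1. sphere_metric (m-1) \<phi>t (ang_t n m q) a c * Ht c b) = (if a = b then 1 else 0)"
    using cht[OF t1 t2] by blast
  define K where "K i j = (if (i = 0 \<and> j = 1) \<or> (i = 1 \<and> j = 0) then -1/2
      else if is_x n i \<and> is_x n j then Hx (i-2) (j-2) / (rho_of \<epsilon> q)\<^sup>2
      else if is_t n m i \<and> is_t n m j then - Ht (i-(n+1)) (j-(n+1)) / (tau_of q)\<^sup>2 else 0)" for i j
  have K1: "K (Suc 0) j = (if j = 0 then -1/2 else 0)" for j unfolding K_def is_x_def is_t_def using n1 by auto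
  have K0: "K 0 j = (if j = 1 then -1/2 else 0)" for j unfolding K_def is_x_def is_t_def using n1 by auto
  have "(\<Sum>k<d. G q i k * K k j) = (if i = j then 1 else 0)" if ij: "i < d" "j < d" for i j
  proof -
    consider "i = 0" | "i = 1" | "is_x n i" | "is_t n m i" using idx_cases[OF ij(1)] by blast
    then show ?thesis
    proof cases
      case 1
      have "(\<Sum>k<d. G q i k * K k j) = (\<Sum>k<d. if k = 1 then -2 * K 1 j else 0)"
        by (intro sum.cong) (auto simp: 1 G_row0)
      also have "\<dots> = -2 * K 1 j" using n1 m1 by simp
      finally show ?thesis by (simp add: K1 1)
    next
      case 2
      have "(\<Sum>k<d. G q i k * K k j) = (\<Sum>k<d. if k = 0 then -2 * K 0 j else 0)"
        by (intro sum.cong) (auto simp: 2 G_row1s)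
      also have "\<dots> = -2 * K 0 j" using n1 m1 by simp
      finally show ?thesis by (simp add: K0 2)
    next
      case 3
      have "(\<Sum>k<d. G q i k * K k j) = (\<Sum>c<n-1. G q i (2 + c) * K (2 + c) j)"
        by (rule sum_block) (use n1 m1 in \<open>auto simp: G_x[OF 3] is_x_def\<close>)
      also have "\<dots> = (if i = j then 1 else 0)"
      proof (cases "is_x n j")
        case True
        have "(\<Sum>c<n-1. G q i (2 + c) * K (2 + c) j) = (\<Sum>c<n-1. sphere_metric (n-1) \<phi>x (ang_x n q) (i-2) c * Hx c (j-2))"
          by (intro sum.cong) (use 3 True rq in \<open>auto simp: G_x K_def is_x_def\<close>)
        also have "\<dots> = (if i = j then 1 else 0)" using Hx[of "i-2" "j-2"] 3 True by (auto simp: is_x_def)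
        finally show ?thesis .
      next
        case False
        have "(\<Sum>c<n-1. G q i (2 + c) * K (2 + c) j) = 0"
          by (intro sum.neutral) (use 3 False in \<open>auto simp: G_x K_def is_x_def is_t_def\<close>)
        then show ?thesis using 3 False by auto
      qed
      finally show ?thesis .
    next
      case 4
      have "(\<Sum>k<d. G q i k * K k j) = (\<Sum>c<m-1. G q i (n + 1 + c) * K (n + 1 + c) j)"
        by (rule sum_block) (use m1 in \<open>auto simp: G_t[OF 4] is_t_def\<close>)
      also have "\<dots> = (if i = j then 1 else 0)"
      proof (cases "is_t n m j")
        case True
        have "(\<Sum>c<m-1. G q i (n + 1 + c) * K (n + 1 + c) j) = (\<Sum>c<m-1. sphere_metric (m-1) \<phi>t (ang_t n m q) (i-(n+1)) c * Ht c (j-(n+1)))"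
          by (intro sum.cong) (use 4 True tq in \<open>auto simp: G_t K_def is_t_def is_x_def\<close>)
        also have "\<dots> = (if i = j then 1 else 0)" using Ht[of "i-(n+1)" "j-(n+1)"] 4 True by (auto simp: is_t_def)
        finally show ?thesis .
      next
        case False
        have "(\<Sum>c<m-1. G q i (n + 1 + c) * K (n + 1 + c) j) = 0"
          by (intro sum.neutral) (use 4 False n1 in \<open>auto simp: G_t K_def is_x_def is_t_def\<close>)
        then show ?thesis using 4 False by auto
      qed
      finally show ?thesis .
    qed
  qed
  then show ?thesis by blast
qed

lemma M_inv: assumes "good q" "i < d" "j < d"
  shows "(\<Sum>k<d. G q i k * M q k j) = (if i = j then 1 else 0)"
proof -
  from inv_exists[OF assms(1)] have "\<forall>i<d. \<forall>j<d. (\<Sum>k<d. G q i k * M q k j) = (if i = j then 1 else 0)"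
    unfolding mat_inv_def by (rule someI_ex)
  then show ?thesis using assms by blast
qed

lemma M_sym: assumes "good q" "i < d" "j < d" shows "M q i j = M q j i"
  by (rule inv_sym[where G = "G q"]) (use assms M_inv G_sym in auto)

lemma M_row0: assumes "good q" "j < d" shows "M q 0 j = (if j = 1 then -1/2 else 0)"
proof -
  have "(\<Sum>k<d. G q 1 k * M q k j) = (\<Sum>k<d. if k = 0 then -2 * M q 0 j else 0)"
    by (intro sum.cong) (auto simp: G_row1 G_row1s)
  also have "\<dots> = -2 * M q 0 j" using n1 m1 by simp
  finally show ?thesis using M_inv[OF assms(1) _ assms(2), of 1] n1 m1 by auto
qed

lemma M_row1: assumes "good q" "j < d" shows "M q 1 j = (if j = 0 then -1/2 else 0)"
proof -
  have "(\<Sum>k<d. G q 0 k * M q k j) = (\<Sum>k<d. if k = 1 then -2 * M q 1 j else 0)"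
    by (intro sum.cong) (auto simp: G_row0)
  also have "\<dots> = -2 * M q 1 j" using n1 m1 by simp
  finally show ?thesis using M_inv[OF assms(1) _ assms(2), of 0] n1 m1 by auto
qed

lemma M_col0: assumes "good q" "j < d" shows "M q j 0 = (if j = 1 then -1/2 else 0)"
  using M_row0[OF assms] M_sym[OF assms(1) assms(2), of 0] n1 by auto
lemma M_col1: assumes "good q" "j < d" shows "M q j 1 = (if j = 0 then -1/2 else 0)"
  using M_row1[OF assms] M_sym[OF assms(1) assms(2), of 1] n1 m1 by auto

end

context S begin

definition rhod :: "nat \<Rightarrow> (nat \<Rightarrow> real) \<Rightarrow> real" where
  "rhod k q = (if k = 0 then -1 - 2 * \<epsilon> * q 1 else 1 - 2 * \<epsilon> * q 0)"

definition lam :: "nat \<Rightarrow> (nat \<Rightarrow> real) \<Rightarrow> nat \<Rightarrow> real" where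
  "lam k q i = (if is_x n i then 2 * rhod k q / rho_of \<epsilon> q else if is_t n m i then 2 / tau_of q else 0)"

lemma rho_deriv: "k < 2 \<Longrightarrow> ((\<lambda>s. rho_of \<epsilon> (q(k:=s))) has_real_derivative rhod k q) (at (q k))"
proof -
  assume "k < 2" then consider "k = 0" | "k = 1" by linarith
  then show ?thesis
  proof cases
    case 1
    show ?thesis unfolding 1 rho_of_def r_of_def f_of_def u_of_def v_of_def rhod_def
      by (auto intro!: derivative_eq_intros)
  next
    case 2
    show ?thesis unfolding 2 rho_of_def r_of_def f_of_def u_of_def v_of_def rhod_def
      by (auto intro!: derivative_eq_intros)
  qed
qed

lemma tau_deriv: "k < 2 \<Longrightarrow> ((\<lambda>s. tau_of (q(k:=s))) has_real_derivative 1) (at (q k))"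
proof -
  assume "k < 2" then consider "k = 0" | "k = 1" by linarith
  then show ?thesis
  proof cases
    case 1
    show ?thesis unfolding 1 tau_of_def u_of_def v_of_def
      by (auto intro!: derivative_eq_intros)
  next
    case 2
    show ?thesis unfolding 2 tau_of_def u_of_def v_of_def
      by (auto intro!: derivative_eq_intros)
  qed
qed

lemma ang_upd: "k < 2 \<Longrightarrow> ang_x n (q(k:=s)) = ang_x n q" "k < 2 \<Longrightarrow> ang_t n m (q(k:=s)) = ang_t n m q"
  unfolding ang_x_def ang_t_def using n1 by (auto intro!: ext)

lemma M_row1s: "good q \<Longrightarrow> j < d \<Longrightarrow> M q (Suc 0) j = (if j = 0 then -1/2 else 0)"
  using M_row1 by simp
lemma M_col1s: "good q \<Longrightarrow> j < d \<Longrightarrow> M q j (Suc 0) = (if j = 0 then -1/2 else 0)"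
  using M_col1 by simp

lemma dG: assumes k: "k < 2" and r: "rho_of \<epsilon> q \<noteq> 0" and t: "tau_of q \<noteq> 0"
  shows "pdiff k (\<lambda>q. G q i j) q = lam k q i * G q i j"
proof -
  consider "(i = 0 \<and> j = 1) \<or> (i = 1 \<and> j = 0)" | "\<not> ((i = 0 \<and> j = 1) \<or> (i = 1 \<and> j = 0))" "is_x n i \<and> is_x n j"
    | "\<not> ((i = 0 \<and> j = 1) \<or> (i = 1 \<and> j = 0))" "\<not> (is_x n i \<and> is_x n j)" "is_t n m i \<and> is_t n m j"
    | "\<not> ((i = 0 \<and> j = 1) \<or> (i = 1 \<and> j = 0))" "\<not> (is_x n i \<and> is_x n j)" "\<not> (is_t n m i \<and> is_t n m j)"
    by blast
  then show ?thesis
  proof cases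
    case 1
    then have "pdiff k (\<lambda>q. G q i j) q = 0" by (intro pdiff_const[where c="-2"]) (auto simp: gbar_def)
    then show ?thesis using 1 n1 by (auto simp: lam_def is_x_def is_t_def)
  next
    case 2
    let ?X = "sphere_metric (n - 1) \<phi>x (ang_x n q) (i - 2) (j - 2)"
    have "pdiff k (\<lambda>q. G q i j) q = 2 * rho_of \<epsilon> q * rhod k q * ?X"
    proof (rule pdiff_DERIV)
      have e: "G (q(k:=s)) i j = (rho_of \<epsilon> (q(k:=s)))\<^sup>2 * ?X" for s
        using 2 by (auto simp: gbar_def ang_upd[OF k] is_x_def)
      show "((\<lambda>s. G (q(k := s)) i j) has_real_derivative 2 * rho_of \<epsilon> q * rhod k q * ?X) (at (q k))"
        unfolding e using rho_deriv[OF k, of q]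
        by (auto intro!: derivative_eq_intros)
    qed
    moreover have "G q i j = (rho_of \<epsilon> q)\<^sup>2 * ?X" using 2 by (auto simp: gbar_def is_x_def)
    ultimately show ?thesis using 2 r by (simp add: lam_def power2_eq_square field_simps)
  next
    case 3
    let ?X = "sphere_metric (m - 1) \<phi>t (ang_t n m q) (i - (n+1)) (j - (n+1))"
    have "pdiff k (\<lambda>q. G q i j) q = - (2 * tau_of q * 1 * ?X)"
    proof (rule pdiff_DERIV)
      have e: "G (q(k:=s)) i j = - (tau_of (q(k:=s)))\<^sup>2 * ?X" for s
        using 3 by (auto simp: gbar_def ang_upd[OF k] is_x_def is_t_def)
      show "((\<lambda>s. G (q(k := s)) i j) has_real_derivative - (2 * tau_of q * 1 * ?X)) (at (q k))"
        unfolding e using tau_deriv[OF k, of q]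
        by (auto intro!: derivative_eq_intros)
    qed
    moreover have "G q i j = - (tau_of q)\<^sup>2 * ?X" using 3 by (auto simp: gbar_def is_x_def is_t_def)
    moreover have "\<not> is_x n i" using 3 unfolding is_x_def is_t_def by auto
    ultimately show ?thesis using 3 t by (simp add: lam_def power2_eq_square field_simps)
  next
    case 4
    then have "pdiff k (\<lambda>q. G q i j) q = 0" by (intro pdiff_const[where c="0"]) (auto simp: gbar_def)
    moreover have "G q i j = 0" unfolding gbar_def using 4 by (simp only: if_False if_not_P)
    ultimately show ?thesis by simp
  qed
qed

lemma good_nz: "good q \<Longrightarrow> rho_of \<epsilon> q \<noteq> 0" "good q \<Longrightarrow> tau_of q \<noteq> 0"
  by (auto simp: good_def)

lemma chr0: assumes "good q" shows "christoffel d G q 0 i j = pdiff 1 (\<lambda>q. G q i j) q / 4"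
proof -
  have "christoffel d G q 0 i j = (\<Sum>l<d. (if l = 1 then -1/2 * (pdiff i (\<lambda>q. G q j l) q + pdiff j (\<lambda>q. G q i l) q - pdiff l (\<lambda>q. G q i j) q) else 0)) / 2"
    unfolding christoffel_def by (intro arg_cong[where f="\<lambda>x. x / 2"] sum.cong) (auto simp: M_row0[OF assms])
  also have "\<dots> = -1/2 * (pdiff i (\<lambda>q. G q j 1) q + pdiff j (\<lambda>q. G q i 1) q - pdiff 1 (\<lambda>q. G q i j) q) / 2"
    using n1 m1 by simp
  also have "pdiff i (\<lambda>q. G q j 1) q = 0" by (rule pdiff_const[where c="if j = 0 then -2 else 0"]) (simp add: G_col1s)
  also have "pdiff j (\<lambda>q. G q i 1) q = 0" by (rule pdiff_const[where c="if i = 0 then -2 else 0"]) (simp add: G_col1s)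
  finally show ?thesis by simp
qed

lemma chr1: assumes "good q" shows "christoffel d G q 1 i j = pdiff 0 (\<lambda>q. G q i j) q / 4"
proof -
  have "christoffel d G q 1 i j = (\<Sum>l<d. (if l = 0 then -1/2 * (pdiff i (\<lambda>q. G q j l) q + pdiff j (\<lambda>q. G q i l) q - pdiff l (\<lambda>q. G q i j) q) else 0)) / 2"
    unfolding christoffel_def by (intro arg_cong[where f="\<lambda>x. x / 2"] sum.cong) (auto simp: M_row1s[OF assms])
  also have "\<dots> = -1/2 * (pdiff i (\<lambda>q. G q j 0) q + pdiff j (\<lambda>q. G q i 0) q - pdiff 0 (\<lambda>q. G q i j) q) / 2"
    using n1 m1 by simp
  also have "pdiff i (\<lambda>q. G q j 0) q = 0" by (rule pdiff_const[where c="if j = 1 then -2 else 0"]) (simp add: G_col0)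
  also have "pdiff j (\<lambda>q. G q i 0) q = 0" by (rule pdiff_const[where c="if i = 1 then -2 else 0"]) (simp add: G_col0)
  finally show ?thesis by simp
qed

lemma hess: assumes g: "good q" and F: "\<And>k. 2 \<le> k \<Longrightarrow> k < d \<Longrightarrow> pdiff k F q = 0"
  shows "hessian d G F q i j = pdiff i (\<lambda>q. pdiff j F q) q
           - (lam 1 q i * G q i j * pdiff 0 F q + lam 0 q i * G q i j * pdiff 1 F q) / 4"
proof -
  have "(\<Sum>k<d. christoffel d G q k i j * pdiff k F q)
      = christoffel d G q 0 i j * pdiff 0 F q + christoffel d G q (Suc 0) i j * pdiff (Suc 0) F q"
    by (rule sum_two) (use n1 m1 F in auto)
  also have "\<dots> = (lam 1 q i * G q i j * pdiff 0 F q + lam 0 q i * G q i j * pdiff 1 F q) / 4"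
  proof -
    have c0: "christoffel d G q 0 i j = lam 1 q i * G q i j / 4"
      using chr0[OF g] dG[of 1 q] good_nz[OF g] by simp
    have c1: "christoffel d G q (Suc 0) i j = lam 0 q i * G q i j / 4"
      using chr1[OF g] dG[of 0 q] good_nz[OF g] by simp
    show ?thesis unfolding c0 c1 by (simp add: field_simps)
  qed
  finally show ?thesis unfolding hessian_def by simp
qed

end

context S begin

definition Ssum :: "nat \<Rightarrow> (nat \<Rightarrow> real) \<Rightarrow> real" where
  "Ssum k q = (real n - 1) * (2 * rhod k q / rho_of \<epsilon> q) + (real m - 1) * (2 / tau_of q)"

lemma xt_excl: "is_x n i \<Longrightarrow> \<not> is_t n m i" unfolding is_x_def is_t_def by auto

lemma count_x: "(\<Sum>i<d. if is_x n i then A else 0) = (real n - 1) * A"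
proof -
  have "(\<Sum>i<d. if is_x n i then A else 0) = (\<Sum>c<n-1. if is_x n (2 + c) then A else 0)"
    by (rule sum_block) (use n1 m1 in \<open>auto simp: is_x_def\<close>)
  also have "\<dots> = (\<Sum>c<n-1. A)" by (intro sum.cong) (auto simp: is_x_def)
  finally show ?thesis using n1 by (simp add: of_nat_diff)
qed

lemma count_t: "(\<Sum>i<d. if is_t n m i then A else 0) = (real m - 1) * A"
proof -
  have "(\<Sum>i<d. if is_t n m i then A else 0) = (\<Sum>c<m-1. if is_t n m (n + 1 + c) then A else 0)"
    by (rule sum_block) (use n1 m1 in \<open>auto simp: is_t_def\<close>)
  also have "\<dots> = (\<Sum>c<m-1. A)" by (intro sum.cong) (auto simp: is_t_def)
  finally show ?thesis using m1 by (simp add: of_nat_diff)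
qed

lemma lam_sum: "(\<Sum>i<d. lam k q i) = Ssum k q"
proof -
  have "(\<Sum>i<d. lam k q i) = (\<Sum>i<d. (if is_x n i then 2 * rhod k q / rho_of \<epsilon> q else 0) + (if is_t n m i then 2 / tau_of q else 0))"
    by (intro sum.cong) (auto simp: lam_def dest: xt_excl)
  also have "\<dots> = Ssum k q" by (simp add: sum.distrib count_x count_t Ssum_def)
  finally show ?thesis .
qed

lemma trace: assumes g: "good q"
  shows "(\<Sum>i<d. \<Sum>j<d. M q i j * (lam k q i * G q i j)) = Ssum k q"
proof -
  have "(\<Sum>j<d. M q i j * (lam k q i * G q i j)) = lam k q i" if i: "i < d" for i
  proof -
    have "(\<Sum>j<d. M q i j * (lam k q i * G q i j)) = lam k q i * (\<Sum>j<d. G q i j * M q j i)"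
      by (simp add: sum_distrib_left) (intro sum.cong refl, simp add: M_sym[OF g i])
    also have "\<dots> = lam k q i" using M_inv[OF g i i] by simp
    finally show ?thesis .
  qed
  then have "(\<Sum>i<d. \<Sum>j<d. M q i j * (lam k q i * G q i j)) = (\<Sum>i<d. lam k q i)"
    by (intro sum.cong) auto
  then show ?thesis using lam_sum by simp
qed

lemma dal: assumes g: "good q" and F: "\<And>k. 2 \<le> k \<Longrightarrow> k < d \<Longrightarrow> pdiff k F q = 0"
  and DF: "\<And>i j. 2 \<le> i \<Longrightarrow> i < d \<Longrightarrow> 2 \<le> j \<Longrightarrow> j < d \<Longrightarrow> pdiff i (\<lambda>q. pdiff j F q) q = 0"
  shows "dalembert d G F q = - (pdiff 0 (\<lambda>q. pdiff 1 F q) q + pdiff 1 (\<lambda>q. pdiff 0 F q) q) / 2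
           - (pdiff 0 F q * Ssum 1 q + pdiff 1 F q * Ssum 0 q) / 4"
proof -
  define D where "D i j = pdiff i (\<lambda>q. pdiff j F q) q" for i j
  have "dalembert d G F q = (\<Sum>i<d. \<Sum>j<d. M q i j * D i j
        - pdiff 0 F q / 4 * (M q i j * (lam 1 q i * G q i j))
        - pdiff 1 F q / 4 * (M q i j * (lam 0 q i * G q i j)))"
    unfolding dalembert_def D_def
    by (intro sum.cong refl) (simp only: hess[OF g F], simp add: algebra_simps)
  also have "\<dots> = (\<Sum>i<d. \<Sum>j<d. M q i j * D i j)
        - pdiff 0 F q / 4 * (\<Sum>i<d. \<Sum>j<d. M q i j * (lam 1 q i * G q i j))
        - pdiff 1 F q / 4 * (\<Sum>i<d. \<Sum>j<d. M q i j * (lam 0 q i * G q i j))"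
    by (simp add: sum_subtractf sum_distrib_left)
  also have "(\<Sum>i<d. \<Sum>j<d. M q i j * D i j) = - (D 0 1 + D 1 0) / 2"
  proof -
    have "(\<Sum>i<d. \<Sum>j<d. M q i j * D i j) = (\<Sum>j<d. M q 0 j * D 0 j) + (\<Sum>j<d. M q (Suc 0) j * D (Suc 0) j)"
    proof (rule sum_two)
      show "2 \<le> d" using n1 m1 by simp
      fix i assume i: "i < d" "2 \<le> i"
      show "(\<Sum>j<d. M q i j * D i j) = 0"
      proof (rule sum.neutral, intro ballI)
        fix j assume "j \<in> {..<d}"
        then show "M q i j * D i j = 0"
          using i M_col0[OF g i(1)] M_col1s[OF g i(1)] DF[of i j] unfolding D_def
          by (cases "j < 2") (auto simp: less_2_cases_iff)
      qed
    qed
    also have "(\<Sum>j<d. M q 0 j * D 0 j) = (\<Sum>j<d. if j = 1 then -1/2 * D 0 1 else 0)"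
      by (intro sum.cong refl) (simp add: M_row0[OF g])
    also have "(\<Sum>j<d. M q (Suc 0) j * D (Suc 0) j) = (\<Sum>j<d. if j = 0 then -1/2 * D 1 0 else 0)"
      by (intro sum.cong refl) (simp add: M_row1s[OF g])
    finally show ?thesis using n1 m1 by simp
  qed
  finally show ?thesis using trace[OF g] unfolding D_def by (simp add: field_simps)
qed

end

lemma pdiff_lin: "pdiff i (\<lambda>q. c * q l) q = (if i = l then c else 0)"
proof (cases "i = l")
  case True
  show ?thesis by (rule pdiff_DERIV) (use True in \<open>auto intro!: derivative_eq_intros\<close>)
next
  case False
  have "pdiff i (\<lambda>q. c * q l) q = 0" by (rule pdiff_const[where c="c * q l"]) (use False in simp)
  then show ?thesis using False by simp
qed

lemma df: "pdiff k f_of q = (if k = 0 then (-1) * q 1 else if k = 1 then (-1) * q 0 else 0)"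
proof -
  consider "k = 0" | "k = 1" | "k \<noteq> 0" "k \<noteq> 1" by blast
  then show ?thesis
  proof cases
    case 1
    have e: "f_of (q(0:=s)) = (-1 * q 1) * s" for s unfolding f_of_def u_of_def v_of_def by simp
    show ?thesis unfolding 1 by (rule pdiff_DERIV) (simp only: e, auto intro!: derivative_eq_intros)
  next
    case 2
    have e: "f_of (q(1:=s)) = (-1 * q 0) * s" for s unfolding f_of_def u_of_def v_of_def by simp
    show ?thesis unfolding 2 by (rule pdiff_DERIV) (simp only: e, auto intro!: derivative_eq_intros)
  next
    case 3
    have "pdiff k f_of q = 0" by (rule pdiff_const[where c="f_of q"]) (use 3 in \<open>auto simp: f_of_def u_of_def v_of_def\<close>)
    then show ?thesis using 3 by simp
  qed
qed

lemma ddf: "pdiff i (\<lambda>q. pdiff j f_of q) q = (if (i = 0 \<and> j = 1) \<or> (i = 1 \<and> j = 0) then -1 else 0)"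
proof -
  have "(\<lambda>q. pdiff j f_of q) = (\<lambda>q. if j = 0 then (-1) * q 1 else if j = 1 then (-1) * q 0 else 0)"
    by (intro ext) (simp add: df)
  then show ?thesis
    by (cases "j = 0"; cases "j = 1") (auto simp: pdiff_lin pdiff_def)
qed

lemma wbar_alg: fixes zu zv zR zT ze zN zM zf :: real
 assumes F: "zf = - zu * zv" and zR: "zR = (zv - zu) + 2*ze*zf" "zR \<noteq> 0" and zT: "zT = zu+zv" "zT \<noteq> 0"
 shows "(1 + (zv * ((zN - 1) * (2 * (1 - 2*ze*zu) / zR) + (zM - 1) * (2/zT)) + zu * ((zN-1)*(2*(-1 - 2*ze*zv)/zR) + (zM-1)*(2/zT)))/4)/2 - (1/2 + ze*zf/(2*zR)) = (zN + zM - 2)/4 + (zN-2)*ze*zf/(2*zR)"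
proof -
  have A: "zv * (2 * (1 - 2*ze*zu) / zR) + zu * (2*(-1 - 2*ze*zv)/zR) = 2 + 4*ze*zf/zR"
  proof -
    have num: "zv * (2 * (1 - 2*ze*zu)) + zu * (2*(-1 - 2*ze*zv)) = 2*zR + 4*ze*zf"
      using zR(1) F by (simp add: algebra_simps)
    have "zv * (2 * (1 - 2*ze*zu) / zR) + zu * (2*(-1 - 2*ze*zv)/zR) = (zv * (2 * (1 - 2*ze*zu)) + zu * (2*(-1 - 2*ze*zv))) / zR"
      by (simp add: add_divide_distrib)
    also have "\<dots> = (2*zR + 4*ze*zf) / zR" by (simp only: num)
    also have "\<dots> = 2 + 4*ze*zf/zR" using zR(2) by (simp add: field_simps)
    finally show ?thesis .
  qed
  have B: "zv * (2/zT) + zu * (2/zT) = 2"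
  proof -
    have T0: "zT \<noteq> 0" using zT by simp
    have "zv * (2/zT) + zu * (2/zT) = (zu + zv) * (2/zT)" by (simp only: distrib_right add.commute)
    also have "\<dots> = zT * (2/zT)" using zT(1) by simp
    also have "\<dots> = 2" using T0 by simp
    finally show ?thesis .
  qed
  have "zv * ((zN - 1) * (2 * (1 - 2*ze*zu) / zR) + (zM - 1) * (2/zT)) + zu * ((zN-1)*(2*(-1 - 2*ze*zv)/zR) + (zM-1)*(2/zT))
     = (zN - 1) * (zv * (2 * (1 - 2*ze*zu) / zR) + zu * (2*(-1 - 2*ze*zv)/zR)) + (zM - 1) * (zv * (2/zT) + zu * (2/zT))"
    by (simp add: algebra_simps)
  also have "\<dots> = (zN - 1) * (2 + 4*ze*zf/zR) + (zM - 1) * 2" by (simp only: A B)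
  finally have C: "zv * ((zN - 1) * (2 * (1 - 2*ze*zu) / zR) + (zM - 1) * (2/zT)) + zu * ((zN-1)*(2*(-1 - 2*ze*zv)/zR) + (zM-1)*(2/zT)) = (zN - 1) * (2 + 4*ze*zf/zR) + (zM - 1) * 2" .
  show ?thesis unfolding C using zR(2) by (simp add: field_simps)
qed

context S begin

lemma box_f: assumes g: "good q"
  shows "dalembert d G f_of q = 1 + (q 1 * Ssum 1 q + q 0 * Ssum 0 q) / 4"
proof -
  have "dalembert d G f_of q = - (pdiff 0 (\<lambda>q. pdiff 1 f_of q) q + pdiff 1 (\<lambda>q. pdiff 0 f_of q) q) / 2
           - (pdiff 0 f_of q * Ssum 1 q + pdiff 1 f_of q * Ssum 0 q) / 4"
    by (rule dal[OF g]) (simp add: df, subst ddf, simp)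
  moreover have "pdiff 0 (\<lambda>q. pdiff 1 f_of q) q = -1" by (simp only: ddf) simp
  moreover have "pdiff 1 (\<lambda>q. pdiff 0 f_of q) q = -1" by (simp only: ddf) simp
  ultimately show ?thesis by (simp add: df field_simps)
qed

definition W :: "(nat \<Rightarrow> real) \<Rightarrow> real" where
  "W q = (real n + real m - 2) / 4 + (real n - 2) * \<epsilon> * f_of q / (2 * rho_of \<epsilon> q)"

lemma wbar_good: assumes g: "good q" shows "wbar n m \<epsilon> \<phi>x \<phi>t q = W q"
proof -
  have r: "rho_of \<epsilon> q \<noteq> 0" and t: "q 0 + q 1 \<noteq> 0" using g by (auto simp: good_def tau_of_def u_of_def v_of_def)
  have r': "q 1 - q 0 - 2 * \<epsilon> * (q 0 * q 1) \<noteq> 0" using r by (simp add: rho_of_def r_of_def f_of_def u_of_def v_of_def)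
  have rd0: "rhod 0 q = - 1 - 2 * \<epsilon> * q 1" and rd1: "rhod 1 q = 1 - 2 * \<epsilon> * q 0" by (simp_all add: rhod_def)
  have "wbar n m \<epsilon> \<phi>x \<phi>t q = (1 + (q 1 * Ssum 1 q + q 0 * Ssum 0 q) / 4) / 2 - (1/2 + \<epsilon> * f_of q / (2 * rho_of \<epsilon> q))"
    unfolding wbar_def box_f[OF g] hbar_def by simp
  also have "\<dots> = W q"
    unfolding W_def Ssum_def rd0 rd1
    by (rule wbar_alg[where zu="q 0" and zv="q 1" and zT="tau_of q"])
       (use r g in \<open>auto simp: f_of_def u_of_def v_of_def rho_of_def r_of_def tau_of_def good_def\<close>)
  finally show ?thesis .
qed

end

context S begin

definition "Kc = (real n - 2) * \<epsilon> / 2"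
definition "Wd0 q = - Kc * (q 1)\<^sup>2 / (rho_of \<epsilon> q)\<^sup>2"
definition "Wd1 q = Kc * (q 0)\<^sup>2 / (rho_of \<epsilon> q)\<^sup>2"

lemma f_deriv: "((\<lambda>s. f_of (q(0:=s))) has_real_derivative - q 1) (at (q 0))"
  "((\<lambda>s. f_of (q(1:=s))) has_real_derivative - q 0) (at (q 1))"
  unfolding f_of_def u_of_def v_of_def by (auto intro!: derivative_eq_intros)

lemma numW: fixes u v F R e :: real assumes "F = - u * v" "R = (v - u) + 2 * e * F"
  shows "- v * R - F * (-1 - 2 * e * v) = - (v\<^sup>2)" "- u * R - F * (1 - 2 * e * u) = u\<^sup>2"
  unfolding assms(2) unfolding assms(1) by (simp_all add: algebra_simps power2_eq_square)

lemma dW0: assumes r: "rho_of \<epsilon> q \<noteq> 0" shows "pdiff 0 W q = Wd0 q"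
proof (rule pdiff_DERIV)
  show "((\<lambda>s. W (q(0 := s))) has_real_derivative Wd0 q) (at (q 0))"
    unfolding W_def
    apply (rule derivative_eq_intros f_deriv rho_deriv[of 0, simplified] | simp)+
    apply (fact r)
  proof -
    have "rho_of \<epsilon> q = (q 1 - q 0) + 2 * \<epsilon> * f_of q" "f_of q = - q 0 * q 1"
      by (simp_all add: rho_of_def r_of_def f_of_def u_of_def v_of_def)
    note nw = numW(1)[OF this(2,1)]
    have "(- (q 1 * ((real n - 2) * \<epsilon>)) * (2 * rho_of \<epsilon> q) - (real n - 2) * \<epsilon> * f_of q * (rhod 0 q * 2)) /
       (2 * rho_of \<epsilon> q * (2 * rho_of \<epsilon> q)) = Kc * (- q 1 * rho_of \<epsilon> q - f_of q * (-1 - 2 * \<epsilon> * q 1)) / (rho_of \<epsilon> q)\<^sup>2"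
      using r by (simp add: Kc_def rhod_def field_simps power2_eq_square)
    also have "\<dots> = Wd0 q" unfolding nw Wd0_def by simp
    finally show "(- (q (Suc 0) * ((real n - 2) * \<epsilon>)) * (2 * rho_of \<epsilon> (q(0 := q 0))) -
      (real n - 2) * \<epsilon> * f_of (q(0 := q 0)) * (rhod 0 q * 2)) /
     (2 * rho_of \<epsilon> (q(0 := q 0)) * (2 * rho_of \<epsilon> (q(0 := q 0)))) = Wd0 q" by simp
  qed simp
qed
lemma dW1: assumes r: "rho_of \<epsilon> q \<noteq> 0" shows "pdiff 1 W q = Wd1 q"
proof (rule pdiff_DERIV)
  show "((\<lambda>s. W (q(1 := s))) has_real_derivative Wd1 q) (at (q 1))"
    unfolding W_def
    apply (rule derivative_eq_intros f_deriv rho_deriv[of 1, simplified] | simp)+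
  proof -
    have "rho_of \<epsilon> q = (q 1 - q 0) + 2 * \<epsilon> * f_of q" "f_of q = - q 0 * q 1"
      by (simp_all add: rho_of_def r_of_def f_of_def u_of_def v_of_def)
    note nw = numW(2)[OF this(2,1)]
    have "(- (q 0 * ((real n - 2) * \<epsilon>)) * (2 * rho_of \<epsilon> q) - (real n - 2) * \<epsilon> * f_of q * (rhod (Suc 0) q * 2)) /
       (2 * rho_of \<epsilon> q * (2 * rho_of \<epsilon> q)) = Kc * (- q 0 * rho_of \<epsilon> q - f_of q * (1 - 2 * \<epsilon> * q 0)) / (rho_of \<epsilon> q)\<^sup>2"
      using r by (simp add: Kc_def rhod_def field_simps power2_eq_square)
    also have "\<dots> = Wd1 q" unfolding nw Wd1_def by simp
    finally show "(- (q 0 * ((real n - 2) * \<epsilon>)) * (2 * rho_of \<epsilon> (q(1 := q 1))) -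
      (real n - 2) * \<epsilon> * f_of (q(1 := q 1)) * (rhod (Suc 0) q * 2)) /
     (2 * rho_of \<epsilon> (q(1 := q 1)) * (2 * rho_of \<epsilon> (q(1 := q 1)))) = Wd1 q" by simp
  qed (simp_all add: r)
qed

definition "Dm q = 2 * Kc * q 0 * q 1 / (rho_of \<epsilon> q) ^ 3"

lemma dWd0: assumes r: "rho_of \<epsilon> q \<noteq> 0" shows "pdiff 1 Wd0 q = Dm q"
proof (rule pdiff_DERIV)
  show "((\<lambda>s. Wd0 (q(1 := s))) has_real_derivative Dm q) (at (q 1))"
    unfolding Wd0_def
    apply (rule derivative_eq_intros f_deriv rho_deriv[of 1, simplified] | simp)+
    apply (fact r)
  proof -
    have R: "rho_of \<epsilon> q = (q 1 - q 0) + 2 * \<epsilon> * (- q 0 * q 1)"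
      by (simp_all add: rho_of_def r_of_def f_of_def u_of_def v_of_def)
    have e: "rho_of \<epsilon> q - q 1 * (1 - 2 * \<epsilon> * q 0) = - q 0" unfolding R by (simp add: algebra_simps)
    have "(- (2 * q (Suc 0) * Kc) * (rho_of \<epsilon> q)\<^sup>2 -
      - Kc * (q 1)\<^sup>2 * (2 * (rhod (Suc 0) q * rho_of \<epsilon> q))) /
     ((rho_of \<epsilon> q)\<^sup>2 * (rho_of \<epsilon> q)\<^sup>2) = -2 * Kc * q 1 * (rho_of \<epsilon> q - q 1 * (1 - 2 * \<epsilon> * q 0)) / (rho_of \<epsilon> q)^3"
      using r by (simp add: rhod_def field_simps power2_eq_square power3_eq_cube)
    also have "\<dots> = Dm q" unfolding e Dm_def by simp
    finally show "(- (2 * q (Suc 0) * Kc) * (rho_of \<epsilon> (q(1 := q 1)))\<^sup>2 -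
      - Kc * ((q(1 := q 1)) 1)\<^sup>2 * (2 * (rhod (Suc 0) q * rho_of \<epsilon> q))) /
     ((rho_of \<epsilon> (q(1 := q 1)))\<^sup>2 * (rho_of \<epsilon> (q(1 := q 1)))\<^sup>2) = Dm q" by simp
  qed
qed

lemma dWd1: assumes r: "rho_of \<epsilon> q \<noteq> 0" shows "pdiff 0 Wd1 q = Dm q"
proof (rule pdiff_DERIV)
  show "((\<lambda>s. Wd1 (q(0 := s))) has_real_derivative Dm q) (at (q 0))"
    unfolding Wd1_def
    apply (rule derivative_eq_intros f_deriv rho_deriv[of 0, simplified] | simp)+
    apply (fact r)
  proof -
    have R: "rho_of \<epsilon> q = (q 1 - q 0) + 2 * \<epsilon> * (- q 0 * q 1)"
      by (simp_all add: rho_of_def r_of_def f_of_def u_of_def v_of_def)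
    have e: "rho_of \<epsilon> q - q 0 * (-1 - 2 * \<epsilon> * q 1) = q 1" unfolding R by (simp add: algebra_simps)
    have "(2 * q 0 * Kc * (rho_of \<epsilon> q)\<^sup>2 -
      Kc * (q 0)\<^sup>2 * (2 * (rhod 0 q * rho_of \<epsilon> q))) /
     ((rho_of \<epsilon> q)\<^sup>2 * (rho_of \<epsilon> q)\<^sup>2) = 2 * Kc * q 0 * (rho_of \<epsilon> q - q 0 * (-1 - 2 * \<epsilon> * q 1)) / (rho_of \<epsilon> q)^3"
      using r by (simp add: rhod_def field_simps power2_eq_square power3_eq_cube)
    also have "\<dots> = Dm q" unfolding e Dm_def by simp
    finally show "(2 * q 0 * Kc * (rho_of \<epsilon> (q(0 := q 0)))\<^sup>2 -
      Kc * ((q(0 := q 0)) 0)\<^sup>2 * (2 * (rhod 0 q * rho_of \<epsilon> q))) /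
     ((rho_of \<epsilon> (q(0 := q 0)))\<^sup>2 * (rho_of \<epsilon> (q(0 := q 0)))\<^sup>2) = Dm q" by simp
  qed
qed

end

lemma box_alg: fixes zu zv zR zT ze zN zM zf zK zD zSa zSb :: real
  assumes F: "zf = - zu * zv" and R: "zR = (zv - zu) + 2 * ze * zf" "zR \<noteq> 0" and T: "zT = zu + zv" "zT \<noteq> 0"
    and K: "zK = (zN - 2) * ze / 2" and D: "zD = 2 * zK * zu * zv / zR ^ 3"
    and S1: "zSb = (zN - 1) * (2 * (1 - 2 * ze * zu) / zR) + (zM - 1) * (2 / zT)"
    and S0: "zSa = (zN - 1) * (2 * (- 1 - 2 * ze * zv) / zR) + (zM - 1) * (2 / zT)"
  shows "- (zD + zD) / 2 - (- zK * zv\<^sup>2 / zR\<^sup>2 * zSb + zK * zu\<^sup>2 / zR\<^sup>2 * zSa) / 4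
    = - ((zN - 2) * ze / (2 * zR)) * ((zN - 3) * zf / zR\<^sup>2 - (zN + zM - 2) * (zv - zu) / (2 * zR))"
proof -
  have n1: "zu\<^sup>2 * (-1 - 2 * ze * zv) - zv\<^sup>2 * (1 - 2 * ze * zu) = - (zv - zu) * zR + 2 * zf"
    unfolding R(1) F by (simp add: algebra_simps power2_eq_square)
  have n2: "zu\<^sup>2 - zv\<^sup>2 = - (zv - zu) * zT" unfolding T(1) by (simp add: algebra_simps power2_eq_square)
  have X: "zu\<^sup>2 * zSa - zv\<^sup>2 * zSb = (zN - 1) * (2 * (zu\<^sup>2 * (-1 - 2 * ze * zv) - zv\<^sup>2 * (1 - 2 * ze * zu)) / zR) + (zM - 1) * (2 * (zu\<^sup>2 - zv\<^sup>2) / zT)"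
    unfolding S0 S1 by (simp add: algebra_simps add_divide_distrib diff_divide_distrib)
  also have "\<dots> = (zN - 1) * (2 * (- (zv - zu) * zR + 2 * zf) / zR) + (zM - 1) * (2 * (- (zv - zu) * zT) / zT)"
    by (simp only: n1 n2)
  also have "\<dots> = (zN - 1) * (- 2 * (zv - zu) + 4 * zf / zR) - 2 * (zM - 1) * (zv - zu)"
    using R(2) T(2) by (simp add: field_simps)
  finally have X: "zu\<^sup>2 * zSa - zv\<^sup>2 * zSb = (zN - 1) * (- 2 * (zv - zu) + 4 * zf / zR) - 2 * (zM - 1) * (zv - zu)" .
  have Y: "- zK * zv\<^sup>2 / zR\<^sup>2 * zSb + zK * zu\<^sup>2 / zR\<^sup>2 * zSa = zK / zR\<^sup>2 * (zu\<^sup>2 * zSa - zv\<^sup>2 * zSb)"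
    by (simp add: algebra_simps)
  have D': "zD = - 2 * zK * zf / zR ^ 3" unfolding D F by simp
  show ?thesis unfolding Y X D' unfolding K using R(2) by (simp add: field_simps power2_eq_square power3_eq_cube) (simp add: algebra_simps)?
qed

context S begin

lemma dWk: "2 \<le> k \<Longrightarrow> pdiff k W q = 0"
  by (rule pdiff_const[where c="W q"]) (simp add: W_def f_of_def rho_of_def r_of_def u_of_def v_of_def)

definition Wj :: "nat \<Rightarrow> (nat \<Rightarrow> real) \<Rightarrow> real" where "Wj j q = (if j = 0 then Wd0 q else if j = 1 then Wd1 q else 0)"

lemma dwb: assumes g: "good q" shows "pdiff j (wbar n m \<epsilon> \<phi>x \<phi>t) q = Wj j q"
proof -
  have "pdiff j (wbar n m \<epsilon> \<phi>x \<phi>t) q = pdiff j W q" by (rule pdiff_good[OF g]) (rule wbar_good)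
  also have "\<dots> = Wj j q" using dW0[OF good_nz(1)[OF g]] dW1[OF good_nz(1)[OF g]] dWk[of j q]
    by (cases "j = 0"; cases "j = 1") (auto simp: Wj_def)
  finally show ?thesis .
qed

lemma ddwb: "pdiff i (\<lambda>q. pdiff j (wbar n m \<epsilon> \<phi>x \<phi>t) q) p = pdiff i (Wj j) p"
  by (rule pdiff_good[OF good_p]) (rule dwb)

lemma box_w: "dalembert d G (wbar n m \<epsilon> \<phi>x \<phi>t) p
   = - (Dm p + Dm p) / 2 - (Wd0 p * Ssum 1 p + Wd1 p * Ssum 0 p) / 4"
proof -
  have a: "pdiff k (wbar n m \<epsilon> \<phi>x \<phi>t) p = 0" if "2 \<le> k" for k
    using dwb[OF good_p, of k] that by (simp add: Wj_def)
  have b: "pdiff i (\<lambda>q. pdiff j (wbar n m \<epsilon> \<phi>x \<phi>t) q) p = 0" if "2 \<le> j" for i j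
  proof -
    have "Wj j = (\<lambda>q. 0)" using that by (auto simp: Wj_def)
    then show ?thesis unfolding ddwb by (simp add: pdiff_def)
  qed
  have c: "pdiff 0 (\<lambda>q. pdiff 1 (wbar n m \<epsilon> \<phi>x \<phi>t) q) p = Dm p"
  proof -
    have "Wj 1 = Wd1" by (rule ext) (simp add: Wj_def)
    then show ?thesis unfolding ddwb using dWd1[OF rho_p] by simp
  qed
  have d: "pdiff 1 (\<lambda>q. pdiff 0 (wbar n m \<epsilon> \<phi>x \<phi>t) q) p = Dm p"
  proof -
    have "Wj 0 = Wd0" by (rule ext) (simp add: Wj_def)
    then show ?thesis unfolding ddwb using dWd0[OF rho_p] by simp
  qed
  have "dalembert d G (wbar n m \<epsilon> \<phi>x \<phi>t) p = - (pdiff 0 (\<lambda>q. pdiff 1 (wbar n m \<epsilon> \<phi>x \<phi>t) q) p + pdiff 1 (\<lambda>q. pdiff 0 (wbar n m \<epsilon> \<phi>x \<phi>t) q) p) / 2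
           - (pdiff 0 (wbar n m \<epsilon> \<phi>x \<phi>t) p * Ssum 1 p + pdiff 1 (wbar n m \<epsilon> \<phi>x \<phi>t) p * Ssum 0 p) / 4"
    by (rule dal[OF good_p]) (auto intro: a b)
  also have "\<dots> = - (Dm p + Dm p) / 2 - (Wd0 p * Ssum 1 p + Wd1 p * Ssum 0 p) / 4"
    unfolding c d dwb[OF good_p] by (simp add: Wj_def)
  finally show ?thesis .
qed

lemma box_w_final: "dalembert d G (wbar n m \<epsilon> \<phi>x \<phi>t) p =
           - ((real n - 2) * \<epsilon> / (2 * rho_of \<epsilon> p)) *
             ((real n - 3) * f_of p / (rho_of \<epsilon> p)\<^sup>2
              - (real n + real m - 2) * r_of p / (2 * rho_of \<epsilon> p))"
  unfolding box_w Wd0_def Wd1_def r_of_def u_of_def v_of_def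
  by (rule box_alg[where zu="p 0" and zv="p 1" and zT="tau_of p" and zK=Kc and zR="rho_of \<epsilon> p"
      and zf="f_of p" and zD="Dm p" and zSa="Ssum 0 p" and zSb="Ssum 1 p" and zN="real n" and zM="real m" and ze=\<epsilon>])
     (use rho_p tau_p in \<open>auto simp: f_of_def u_of_def v_of_def rho_of_def r_of_def tau_of_def Kc_def Dm_def Ssum_def rhod_def\<close>)

end

context S begin

definition cc :: "nat \<Rightarrow> real" where
  "cc i = (lam 1 p i * p 1 + lam 0 p i * p 0) / 4 - hbar \<epsilon> p"

lemma pi_entry: "pibar n m \<epsilon> \<phi>x \<phi>t p i j = (if (i = 0 \<and> j = 1) \<or> (i = 1 \<and> j = 0) then -1 else 0) + cc i * G p i j"
proof -
  have h: "hessian d G f_of p i j = pdiff i (\<lambda>q. pdiff j f_of q) p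
           - (lam 1 p i * G p i j * pdiff 0 f_of p + lam 0 p i * G p i j * pdiff 1 f_of p) / 4"
    by (rule hess[OF good_p]) (simp add: df)
  have dd: "pdiff i (\<lambda>q. pdiff j f_of q) p = (if (i = 0 \<and> j = 1) \<or> (i = 1 \<and> j = 0) then -1 else 0)"
    by (rule ddf)
  show ?thesis unfolding pibar_def h dd cc_def by (simp add: df algebra_simps diff_divide_distrib add_divide_distrib)
qed

lemma cc_x: assumes "is_x n i" shows "cc i = \<epsilon> * f_of p / (2 * rho_of \<epsilon> p)"
proof -
  have num: "2 * (1 - 2 * \<epsilon> * p 0) * p 1 + 2 * (-1 - 2 * \<epsilon> * p 1) * p 0 = 2 * rho_of \<epsilon> p + 4 * \<epsilon> * f_of p"
    by (simp add: rho_of_def r_of_def f_of_def u_of_def v_of_def algebra_simps)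
  have "lam 1 p i * p 1 + lam 0 p i * p 0 = (2 * (1 - 2 * \<epsilon> * p 0) * p 1 + 2 * (-1 - 2 * \<epsilon> * p 1) * p 0) / rho_of \<epsilon> p"
    using assms by (simp add: lam_def rhod_def add_divide_distrib)
  also have "\<dots> = (2 * rho_of \<epsilon> p + 4 * \<epsilon> * f_of p) / rho_of \<epsilon> p" by (simp only: num)
  finally have e: "lam 1 p i * p 1 + lam 0 p i * p 0 = (2 * rho_of \<epsilon> p + 4 * \<epsilon> * f_of p) / rho_of \<epsilon> p" .
  show ?thesis unfolding cc_def e hbar_def using rho_p by (simp add: field_simps)
qed

lemma cc_t: assumes "is_t n m i" shows "cc i = - (\<epsilon> * f_of p / (2 * rho_of \<epsilon> p))"
proof -
  have nx: "\<not> is_x n i" using assms unfolding is_x_def is_t_def by auto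
  have "lam 1 p i * p 1 + lam 0 p i * p 0 = 2 * (p 0 + p 1) / tau_of p"
    using nx assms by (simp add: lam_def add_divide_distrib algebra_simps)
  also have "\<dots> = 2" using tau_p by (simp add: tau_of_def u_of_def v_of_def field_simps)
  finally have e: "lam 1 p i * p 1 + lam 0 p i * p 0 = 2" .
  show ?thesis unfolding cc_def e hbar_def by simp
qed

lemma cc_01: "i < 2 \<Longrightarrow> cc i = - hbar \<epsilon> p"
  using n1 by (auto simp: cc_def lam_def is_x_def is_t_def)

lemma fsum: assumes "\<beta> < d" shows "(\<Sum>j<d. frame p \<beta> j * Z j) =
   (if \<beta> < 2 then frame p \<beta> 0 * Z 0 + frame p \<beta> 1 * Z 1 else Z \<beta>)"
proof (cases "\<beta> < 2")
  case True
  have "(\<Sum>j<d. frame p \<beta> j * Z j) = frame p \<beta> 0 * Z 0 + frame p \<beta> (Suc 0) * Z (Suc 0)"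
    by (rule sum_two) (use n1 m1 True in \<open>auto simp: frame_def\<close>)
  then show ?thesis using True by simp
next
  case False
  have "(\<Sum>j<d. frame p \<beta> j * Z j) = (\<Sum>j<d. if j = \<beta> then Z j else 0)"
    by (intro sum.cong refl) (use False in \<open>auto simp: frame_def\<close>)
  also have "\<dots> = Z \<beta>" using assms by simp
  finally show ?thesis using False by simp
qed

lemma bilin_frame: assumes "\<alpha> < d" "\<beta> < d"
  shows "bilin d B (frame p \<alpha>) (frame p \<beta>) =
    (if \<alpha> < 2 then frame p \<alpha> 0 * (if \<beta> < 2 then frame p \<beta> 0 * B 0 0 + frame p \<beta> 1 * B 0 1 else B 0 \<beta>)
                   + frame p \<alpha> 1 * (if \<beta> < 2 then frame p \<beta> 0 * B 1 0 + frame p \<beta> 1 * B 1 1 else B 1 \<beta>)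
     else (if \<beta> < 2 then frame p \<beta> 0 * B \<alpha> 0 + frame p \<beta> 1 * B \<alpha> 1 else B \<alpha> \<beta>))" (is "_ = ?rhs")
proof -
  have "bilin d B (frame p \<alpha>) (frame p \<beta>) = (\<Sum>i<d. frame p \<alpha> i * (\<Sum>j<d. frame p \<beta> j * B i j))"
    unfolding bilin_def by (simp add: sum_distrib_left mult.assoc)
  also have "\<dots> = (\<Sum>i<d. frame p \<alpha> i * (if \<beta> < 2 then frame p \<beta> 0 * B i 0 + frame p \<beta> 1 * B i 1 else B i \<beta>))"
    by (intro sum.cong refl) (simp add: fsum[OF assms(2)])
  also have "\<dots> = ?rhs"
    by (subst fsum[OF assms(1)]) simp
  finally show ?thesis .
qed

end

context S begin

abbreviation "ce \<equiv> \<epsilon> * f_of p / (2 * rho_of \<epsilon> p)"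
abbreviation "PI \<equiv> pibar n m \<epsilon> \<phi>x \<phi>t p"

lemma G00: "G p 0 0 = 0" and G11: "G p (Suc 0) (Suc 0) = 0" and G01: "G p 0 (Suc 0) = -2" and G10: "G p (Suc 0) 0 = -2"
  using G_row0[of p] G_row1s[of p] by auto

lemma PI00: "PI 0 0 = 0" by (simp add: pi_entry G00)
lemma PI11: "PI (Suc 0) (Suc 0) = 0" by (simp add: pi_entry G11)
lemma PI01: "PI 0 (Suc 0) = 2 * ce" using cc_01[of 0] by (simp add: pi_entry G01 hbar_def)
lemma PI10: "PI (Suc 0) 0 = 2 * ce" using cc_01[of 1] by (simp add: pi_entry G10 hbar_def)
lemma PI0b: "2 \<le> b \<Longrightarrow> PI 0 b = 0" by (simp add: pi_entry G_row0)
lemma PI1b: "2 \<le> b \<Longrightarrow> PI (Suc 0) b = 0" by (simp add: pi_entry G_row1s)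
lemma PIa0: "2 \<le> a \<Longrightarrow> PI a 0 = 0" by (simp add: pi_entry G_col0)
lemma PIa1: "2 \<le> a \<Longrightarrow> PI a (Suc 0) = 0" by (simp add: pi_entry G_col1s)
lemma PIab: "2 \<le> a \<Longrightarrow> 2 \<le> b \<Longrightarrow> PI a b = cc a * G p a b" by (simp add: pi_entry)

lemma frame_facts: assumes f: "f_of p > 0"
  shows "frame p 0 0 = - frame p (Suc 0) 0" "frame p 0 (Suc 0) = frame p (Suc 0) (Suc 0)"
    "frame p (Suc 0) 0 * frame p (Suc 0) (Suc 0) = -1/4"
proof -
  show "frame p 0 0 = - frame p (Suc 0) 0" "frame p 0 (Suc 0) = frame p (Suc 0) (Suc 0)"
    by (simp_all add: frame_def)
  have s: "sqrt (f_of p) * sqrt (f_of p) = f_of p" using f by simp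
  have sp: "sqrt (f_of p) > 0" using f by simp
  have uv: "u_of p * v_of p = - f_of p" by (simp add: f_of_def)
  have "frame p (Suc 0) 0 * frame p (Suc 0) (Suc 0) = (u_of p * v_of p) / (4 * (sqrt (f_of p) * sqrt (f_of p)))"
    by (simp add: frame_def)
  also have "\<dots> = -1/4" unfolding uv s using f by simp
  finally show "frame p (Suc 0) 0 * frame p (Suc 0) (Suc 0) = -1/4" .
qed

lemma pi_main: assumes f: "f_of p > 0"
  shows "\<forall>\<alpha><n + m. \<forall>\<beta><n + m.
           bilin (n + m) (pibar n m \<epsilon> \<phi>x \<phi>t p) (frame p \<alpha>) (frame p \<beta>) =
             (if \<alpha> = 0 \<and> \<beta> = 0 then \<epsilon> * f_of p / (2 * rho_of \<epsilon> p)
              else if \<alpha> = 1 \<and> \<beta> = 1 then - (\<epsilon> * f_of p / (2 * rho_of \<epsilon> p))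
              else if is_x n \<alpha> \<and> is_x n \<beta> then
                \<epsilon> * f_of p / (2 * rho_of \<epsilon> p) * gbar n m \<epsilon> \<phi>x \<phi>t p \<alpha> \<beta>
              else if is_t n m \<alpha> \<and> is_t n m \<beta> then
                - (\<epsilon> * f_of p / (2 * rho_of \<epsilon> p)) * gbar n m \<epsilon> \<phi>x \<phi>t p \<alpha> \<beta>
              else 0)"
proof (intro allI impI)
  fix \<alpha> \<beta> assume a: "\<alpha> < n + m" and b: "\<beta> < n + m"
  note ff = frame_facts[OF f]
  have nx01: "\<not> is_x n 0" "\<not> is_x n (Suc 0)" "\<not> is_t n m 0" "\<not> is_t n m (Suc 0)"
    using n1 by (auto simp: is_x_def is_t_def)
  consider "\<alpha> = 0" | "\<alpha> = 1" | "2 \<le> \<alpha>" by linarith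
  note ca = this
  consider "\<beta> = 0" | "\<beta> = 1" | "2 \<le> \<beta>" by linarith
  note cb = this
  show "bilin (n + m) PI (frame p \<alpha>) (frame p \<beta>) = (if \<alpha> = 0 \<and> \<beta> = 0 then ce
              else if \<alpha> = 1 \<and> \<beta> = 1 then - ce
              else if is_x n \<alpha> \<and> is_x n \<beta> then ce * G p \<alpha> \<beta>
              else if is_t n m \<alpha> \<and> is_t n m \<beta> then - ce * G p \<alpha> \<beta>
              else 0)"
  proof (cases rule: ca)
    case 1
    then show ?thesis
    proof (cases rule: cb)
      case 1
      have "bilin (n + m) PI (frame p \<alpha>) (frame p \<beta>) = 2 * (frame p (Suc 0) 0 * frame p (Suc 0) (Suc 0)) * (- 2 * ce)"
        unfolding bilin_frame[OF a b] using \<open>\<alpha> = 0\<close> 1 ff(1,2) by (simp add: PI00 PI11 PI01 PI10 algebra_simps)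
      then show ?thesis using \<open>\<alpha> = 0\<close> 1 ff(3) by simp
    next
      case 2
      have "bilin (n + m) PI (frame p \<alpha>) (frame p \<beta>) = 0"
        unfolding bilin_frame[OF a b] using \<open>\<alpha> = 0\<close> 2 ff(1,2) by (simp add: PI00 PI11 PI01 PI10 algebra_simps)
      then show ?thesis using \<open>\<alpha> = 0\<close> 2 nx01 by simp
    next
      case 3
      have "bilin (n + m) PI (frame p \<alpha>) (frame p \<beta>) = 0"
        unfolding bilin_frame[OF a b] using \<open>\<alpha> = 0\<close> 3 by (simp add: PI0b PI1b)
      then show ?thesis using \<open>\<alpha> = 0\<close> 3 nx01 by simp
    qed
  next
    case 2
    then show ?thesis
    proof (cases rule: cb)
      case 1
      have "bilin (n + m) PI (frame p \<alpha>) (frame p \<beta>) = 0"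
        unfolding bilin_frame[OF a b] using \<open>\<alpha> = 1\<close> 1 ff(1,2) by (simp add: PI00 PI11 PI01 PI10 algebra_simps)
      then show ?thesis using \<open>\<alpha> = 1\<close> 1 nx01 by simp
    next
      case 2
      have "bilin (n + m) PI (frame p \<alpha>) (frame p \<beta>) = 2 * (frame p (Suc 0) 0 * frame p (Suc 0) (Suc 0)) * (2 * ce)"
        unfolding bilin_frame[OF a b] using \<open>\<alpha> = 1\<close> 2 ff(1,2) by (simp add: PI00 PI11 PI01 PI10 algebra_simps)
      then show ?thesis using \<open>\<alpha> = 1\<close> 2 ff(3) by simp
    next
      case 3
      have "bilin (n + m) PI (frame p \<alpha>) (frame p \<beta>) = 0"
        unfolding bilin_frame[OF a b] using \<open>\<alpha> = 1\<close> 3 by (simp add: PI0b PI1b)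
      then show ?thesis using \<open>\<alpha> = 1\<close> 3 nx01 by simp
    qed
  next
    case 3
    then show ?thesis
    proof (cases rule: cb)
      case 1
      have "bilin (n + m) PI (frame p \<alpha>) (frame p \<beta>) = 0"
        unfolding bilin_frame[OF a b] using 3 1 by (simp add: PIa0 PIa1)
      then show ?thesis using 3 1 nx01 by simp
    next
      case 2
      have "bilin (n + m) PI (frame p \<alpha>) (frame p \<beta>) = 0"
        unfolding bilin_frame[OF a b] using 3 2 by (simp add: PIa0 PIa1)
      then show ?thesis using 3 2 nx01 by simp
    next
      case 4: 3
      have e: "bilin (n + m) PI (frame p \<alpha>) (frame p \<beta>) = cc \<alpha> * G p \<alpha> \<beta>"
        unfolding bilin_frame[OF a b] using 3 4 by (simp add: PIab)
      show ?thesis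
      proof (cases "is_x n \<alpha> \<and> is_x n \<beta>")
        case True
        then show ?thesis using e cc_x 3 4 by simp
      next
        case nx: False
        show ?thesis
        proof (cases "is_t n m \<alpha> \<and> is_t n m \<beta>")
          case True
          have "\<not> is_x n \<alpha>" using True xt_excl by blast
          then show ?thesis using e cc_t True 3 4 by simp
        next
          case False
          have np: "\<not> ((\<alpha> = 0 \<and> \<beta> = 1) \<or> (\<alpha> = 1 \<and> \<beta> = 0))" using 3 by auto
          have "G p \<alpha> \<beta> = 0" unfolding gbar_def using np nx False by (simp only: if_False if_not_P)
          then show ?thesis using e nx False 3 4 by simp
        qed
      qed
    qed
  qed
qed

end

theorem proposition3p7:
  fixes n m :: nat and \<epsilon> :: real
    and \<phi>x \<phi>t :: "(nat \<Rightarrow> real) \<Rightarrow> nat \<Rightarrow> real"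
    and p :: "nat \<Rightarrow> real"
  assumes "1 \<le> n" and "1 \<le> m"
    and "local_sphere_chart (n - 1) \<phi>x (ang_x n p)"
    and "local_sphere_chart (m - 1) \<phi>t (ang_t n m p)"
    and "tau_of p > 0" and "r_of p > 0"
    and "f_of p > 0"
    and "rho_of \<epsilon> p \<noteq> 0"
  shows "\<forall>\<alpha><n + m. \<forall>\<beta><n + m.
           bilin (n + m) (pibar n m \<epsilon> \<phi>x \<phi>t p) (frame p \<alpha>) (frame p \<beta>) =
             (if \<alpha> = 0 \<and> \<beta> = 0 then \<epsilon> * f_of p / (2 * rho_of \<epsilon> p)
              else if \<alpha> = 1 \<and> \<beta> = 1 then - (\<epsilon> * f_of p / (2 * rho_of \<epsilon> p))
              else if is_x n \<alpha> \<and> is_x n \<beta> then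
                \<epsilon> * f_of p / (2 * rho_of \<epsilon> p) * gbar n m \<epsilon> \<phi>x \<phi>t p \<alpha> \<beta>
              else if is_t n m \<alpha> \<and> is_t n m \<beta> then
                - (\<epsilon> * f_of p / (2 * rho_of \<epsilon> p)) * gbar n m \<epsilon> \<phi>x \<phi>t p \<alpha> \<beta>
              else 0) \<and>
         wbar n m \<epsilon> \<phi>x \<phi>t p =
           (real n + real m - 2) / 4 + (real n - 2) * \<epsilon> * f_of p / (2 * rho_of \<epsilon> p) \<and>
         dalembert (n + m) (gbar n m \<epsilon> \<phi>x \<phi>t) (wbar n m \<epsilon> \<phi>x \<phi>t) p =
           - ((real n - 2) * \<epsilon> / (2 * rho_of \<epsilon> p)) *
             ((real n - 3) * f_of p / (rho_of \<epsilon> p)\<^sup>2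
              - (real n + real m - 2) * r_of p / (2 * rho_of \<epsilon> p))"
  proof -
  obtain ex where ex: "ex > 0" and exH: "\<And>\<theta>. (\<forall>a<n-1. \<bar>\<theta> a - ang_x n p a\<bar> < ex) \<and> (\<forall>a\<ge>n-1. \<theta> a = 0) \<Longrightarrow>
        (\<exists>H. \<forall>a<n-1. \<forall>b<n-1. (\<Sum>c<n-1. sphere_metric (n-1) \<phi>x \<theta> a c * H c b) = (if a = b then 1 else 0))"
    using assms(3) unfolding local_sphere_chart_def by blast
  obtain et where et: "et > 0" and etH: "\<And>\<theta>. (\<forall>a<m-1. \<bar>\<theta> a - ang_t n m p a\<bar> < et) \<and> (\<forall>a\<ge>m-1. \<theta> a = 0) \<Longrightarrow>
        (\<exists>H. \<forall>a<m-1. \<forall>b<m-1. (\<Sum>c<m-1. sphere_metric (m-1) \<phi>t \<theta> a c * H c b) = (if a = b then 1 else 0))"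
    using assms(4) unfolding local_sphere_chart_def by blast
  define \<delta> where "\<delta> = min ex et"
  interpret S n m \<epsilon> \<phi>x \<phi>t p \<delta>
  proof
    show "1 \<le> n" "1 \<le> m" using assms(1,2) .
    show "0 < \<delta>" using ex et by (simp add: \<delta>_def)
    show "rho_of \<epsilon> p \<noteq> 0" using assms(8) .
    show "tau_of p \<noteq> 0" using assms(5) by simp
  next
    fix \<theta> :: "nat \<Rightarrow> real"
    assume "\<forall>a<n-1. \<bar>\<theta> a - ang_x n p a\<bar> < \<delta>" "\<forall>a\<ge>n-1. \<theta> a = 0"
    then show "\<exists>H. \<forall>a<n-1. \<forall>b<n-1. (\<Sum>c<n-1. sphere_metric (n-1) \<phi>x \<theta> a c * H c b) = (if a = b then 1 else 0)"
      by (intro exH) (auto simp: \<delta>_def)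
  next
    fix \<theta> :: "nat \<Rightarrow> real"
    assume "\<forall>a<m-1. \<bar>\<theta> a - ang_t n m p a\<bar> < \<delta>" "\<forall>a\<ge>m-1. \<theta> a = 0"
    then show "\<exists>H. \<forall>a<m-1. \<forall>b<m-1. (\<Sum>c<m-1. sphere_metric (m-1) \<phi>t \<theta> a c * H c b) = (if a = b then 1 else 0)"
      by (intro etH) (auto simp: \<delta>_def)
  qed
  show ?thesis
    using pi_main[OF assms(7)] wbar_good[OF good_p] box_w_final by (simp add: W_def)
qed

end
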